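(* Let $\mathbb{K}\subset\mathbb{K}'$ be an algebraically pure field extension where $\mathbb{K}$ is $\aleph_0$-complete. Let $x=(x_1,\ldots,x_n)$, $Y=(Y_1,\ldots,Y_m)$ and $f\in\mathbb{K}[\![x]\!][Y]^r$. Assume that there exists a solution $\hat y\in\mathbb{K}'[\![x]\!]^m$ of $f=0$ such that $\hat y_i\in\mathbb{K}'[\![x_{J_i}]\!]$ for some subsets $J_i\subset\{1,\ldots,n\}$, $i=1,\ldots,m$. Then there is a solution $y\in\mathbb{K}[\![x]\!]^m$ of $f=0$ such that $y_i\in\mathbb{K}[\![x_{J_i}]\!]$ and $\mathrm{ord}(y_i)=\mathrm{ord}(\hat y_i)$ for all $i=1,\ldots,m$.
   Context: A field extension $\mathbb{K}\subset\mathbb{K}'$ is algebraically pure if every finite system of polynomial equations with coefficients in $\mathbb{K}$ that has a solution in $\mathbb{K}'$ has a solution in $\mathbb{K}$. A field $\mathbb{K}$ is called $\aleph_0$-complete if every countable system $\mathcal S$ of polynomial equations with coefficients in $\mathbb{K}$ (in a countable number of indeterminates) has a solution in $\mathbb{K}$ if and only if every finite sub-system of $\mathcal S$ has a solution in $\mathbb{K}$. For a field $L$ and $J\subset\{1,\ldots,n\}$, $L[\![x_J]\!]$ denotes the ring of formal power series in the variables $x_j$, $j\in J$, viewed inside $L[\![x]\!]$. For a power series $g$, $\mathrm{ord}(g)$ is the smallest total degree of a monomial appearing in $g$ with nonzero coefficient ($\mathrm{ord}(0)=\infty$). *)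

theory Defs
  imports Main "HOL-Library.Extended_Nat" "HOL-Library.Countable_Set"
begin

definition subfield :: "'a::field set \<Rightarrow> bool" where
  "subfield K \<longleftrightarrow> 0 \<in> K \<and> 1 \<in> K \<and>
     (\<forall>a\<in>K. \<forall>b\<in>K. a + b \<in> K \<and> a * b \<in> K) \<and>
     (\<forall>a\<in>K. - a \<in> K \<and> inverse a \<in> K)"

text \<open>A polynomial in the indeterminates z_0, z_1, ... (countably many) with coefficients in K:
  a coefficient function on exponent vectors, with finitely many nonzero coefficients,
  each exponent vector finitely supported.\<close>
definition is_poly :: "'a::field set \<Rightarrow> ((nat \<Rightarrow> nat) \<Rightarrow> 'a) \<Rightarrow> bool" where
  "is_poly K p \<longleftrightarrow> (\<forall>\<alpha>. p \<alpha> \<in> K) \<and> finite {\<alpha>. p \<alpha> \<noteq> 0} \<and>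
     (\<forall>\<alpha>. p \<alpha> \<noteq> 0 \<longrightarrow> finite {i. \<alpha> i \<noteq> 0})"

definition poly_eval :: "((nat \<Rightarrow> nat) \<Rightarrow> 'a::field) \<Rightarrow> (nat \<Rightarrow> 'a) \<Rightarrow> 'a" where
  "poly_eval p v = (\<Sum>\<alpha>\<in>{\<alpha>. p \<alpha> \<noteq> 0}. p \<alpha> * (\<Prod>i\<in>{i. \<alpha> i \<noteq> 0}. v i ^ \<alpha> i))"

text \<open>The extension K \<subseteq> K' is modelled with K' the ambient field type.\<close>
definition alg_pure :: "'a::field set \<Rightarrow> bool" where
  "alg_pure K \<longleftrightarrow> (\<forall>P. finite P \<and> (\<forall>p\<in>P. is_poly K p) \<and> (\<exists>v. \<forall>p\<in>P. poly_eval p v = 0)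
      \<longrightarrow> (\<exists>v. (\<forall>i. v i \<in> K) \<and> (\<forall>p\<in>P. poly_eval p v = 0)))"

definition aleph0_complete :: "'a::field set \<Rightarrow> bool" where
  "aleph0_complete K \<longleftrightarrow> (\<forall>S. countable S \<and> (\<forall>p\<in>S. is_poly K p) \<longrightarrow>
      ((\<exists>v. (\<forall>i. v i \<in> K) \<and> (\<forall>p\<in>S. poly_eval p v = 0)) \<longleftrightarrow>
       (\<forall>F. F \<subseteq> S \<and> finite F \<longrightarrow> (\<exists>v. (\<forall>i. v i \<in> K) \<and> (\<forall>p\<in>F. poly_eval p v = 0)))))"

type_synonym 'a mps = "(nat \<Rightarrow> nat) \<Rightarrow> 'a"

definition mps :: "nat \<Rightarrow> 'a::field set \<Rightarrow> 'a mps set" where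
  "mps n K = {f. (\<forall>\<alpha>. f \<alpha> \<in> K) \<and> (\<forall>\<alpha>. f \<alpha> \<noteq> 0 \<longrightarrow> (\<forall>i\<ge>n. \<alpha> i = 0))}"

definition mps_in_vars :: "nat set \<Rightarrow> 'a::field mps \<Rightarrow> bool" where
  "mps_in_vars J f \<longleftrightarrow> (\<forall>\<alpha>. f \<alpha> \<noteq> 0 \<longrightarrow> (\<forall>i. \<alpha> i \<noteq> 0 \<longrightarrow> i \<in> J))"

definition mps_zero :: "'a::field mps" where
  "mps_zero = (\<lambda>_. 0)"

definition mps_one :: "'a::field mps" where
  "mps_one = (\<lambda>\<alpha>. if \<alpha> = (\<lambda>_. 0) then 1 else 0)"

definition mps_times :: "'a::field mps \<Rightarrow> 'a mps \<Rightarrow> 'a mps" where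
  "mps_times f g = (\<lambda>\<alpha>. \<Sum>\<beta>\<in>{\<beta>. \<forall>i. \<beta> i \<le> \<alpha> i}. f \<beta> * g (\<lambda>i. \<alpha> i - \<beta> i))"

primrec mps_pow :: "'a::field mps \<Rightarrow> nat \<Rightarrow> 'a mps" where
  "mps_pow f 0 = mps_one"
| "mps_pow f (Suc k) = mps_times f (mps_pow f k)"

definition mps_monom :: "nat \<Rightarrow> (nat \<Rightarrow> 'a::field mps) \<Rightarrow> (nat \<Rightarrow> nat) \<Rightarrow> 'a mps" where
  "mps_monom m y \<gamma> = foldr (\<lambda>j acc. mps_times (mps_pow (y j) (\<gamma> j)) acc) [0..<m] mps_one"

definition is_Ypoly :: "nat \<Rightarrow> nat \<Rightarrow> 'a::field set \<Rightarrow> ((nat \<Rightarrow> nat) \<Rightarrow> 'a mps) \<Rightarrow> bool" where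
  "is_Ypoly n m K c \<longleftrightarrow> finite {\<gamma>. c \<gamma> \<noteq> mps_zero} \<and>
     (\<forall>\<gamma>. c \<gamma> \<in> mps n K) \<and>
     (\<forall>\<gamma>. c \<gamma> \<noteq> mps_zero \<longrightarrow> (\<forall>j\<ge>m. \<gamma> j = 0))"

definition eval_Y :: "nat \<Rightarrow> ((nat \<Rightarrow> nat) \<Rightarrow> 'a::field mps) \<Rightarrow> (nat \<Rightarrow> 'a mps) \<Rightarrow> 'a mps" where
  "eval_Y m c y = (\<lambda>\<alpha>. \<Sum>\<gamma>\<in>{\<gamma>. c \<gamma> \<noteq> mps_zero}. mps_times (c \<gamma>) (mps_monom m y \<gamma>) \<alpha>)"

definition mps_ord :: "'a::field mps \<Rightarrow> enat" where
  "mps_ord f = (if f = mps_zero then \<infinity>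
     else enat (LEAST d. \<exists>\<alpha>. f \<alpha> \<noteq> 0 \<and> (\<Sum>i\<in>{i. \<alpha> i \<noteq> 0}. \<alpha> i) = d))"

end

theory Submission
  imports Defs
begin

definition tm :: "(nat \<Rightarrow> nat) \<Rightarrow> (nat \<Rightarrow> 'a::field) \<Rightarrow> 'a" where
  "tm \<alpha> v = (\<Prod>i\<in>{i. \<alpha> i \<noteq> 0}. v i ^ \<alpha> i)"

lemma tm_super:
  assumes "finite S" "{i. \<alpha> i \<noteq> 0} \<subseteq> S"
  shows "tm \<alpha> v = (\<Prod>i\<in>S. v i ^ \<alpha> i)"
  unfolding tm_def by (rule prod.mono_neutral_left[OF assms]) auto

lemma tm_add:
  assumes "finite {i. \<alpha> i \<noteq> 0}" "finite {i. \<beta> i \<noteq> 0}"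
  shows "tm (\<lambda>i. \<alpha> i + \<beta> i) v = tm \<alpha> v * tm \<beta> v"
proof -
  let ?S = "{i. \<alpha> i \<noteq> 0} \<union> {i. \<beta> i \<noteq> 0}"
  have "tm (\<lambda>i. \<alpha> i + \<beta> i) v = (\<Prod>i\<in>?S. v i ^ (\<alpha> i + \<beta> i))"
    by (rule tm_super) (use assms in auto)
  also have "\<dots> = (\<Prod>i\<in>?S. v i ^ \<alpha> i) * (\<Prod>i\<in>?S. v i ^ \<beta> i)"
    by (simp add: power_add prod.distrib)
  also have "\<dots> = tm \<alpha> v * tm \<beta> v"
    using tm_super[of ?S \<alpha> v] tm_super[of ?S \<beta> v] assms by auto
  finally show ?thesis .
qed

lemma eval_super:
  assumes "finite S" "{\<alpha>. p \<alpha> \<noteq> 0} \<subseteq> S"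
  shows "poly_eval p v = (\<Sum>\<alpha>\<in>S. p \<alpha> * tm \<alpha> v)"
  unfolding poly_eval_def tm_def[symmetric] by (rule sum.mono_neutral_left[OF assms]) auto

definition polyfun :: "'a::field set \<Rightarrow> ((nat \<Rightarrow> 'a) \<Rightarrow> 'a) \<Rightarrow> bool" where
  "polyfun K F \<longleftrightarrow> (\<exists>p. is_poly K p \<and> (\<forall>v. F v = poly_eval p v))"

lemma sf:
  assumes "subfield K"
  shows "0 \<in> K" "1 \<in> K" "a \<in> K \<Longrightarrow> b \<in> K \<Longrightarrow> a + b \<in> K" "a \<in> K \<Longrightarrow> b \<in> K \<Longrightarrow> a * b \<in> K"
    "a \<in> K \<Longrightarrow> - a \<in> K"
  using assms unfolding subfield_def by auto

lemma sf_sum: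
  assumes "subfield K" "\<forall>x\<in>A. g x \<in> K"
  shows "sum g A \<in> K"
proof (cases "finite A")
  case True
  then show ?thesis using assms(2)
    by (induction A rule: finite_induct) (auto intro: sf[OF assms(1)])
next
  case False
  then show ?thesis using sf[OF assms(1)] by simp
qed

lemma polyfun_const:
  assumes K: "subfield K" and c: "c \<in> K"
  shows "polyfun K (\<lambda>v. c)"
proof -
  define p :: "(nat \<Rightarrow> nat) \<Rightarrow> 'a" where "p = (\<lambda>\<alpha>. if \<alpha> = (\<lambda>_. 0) then c else 0)"
  have "is_poly K p"
    unfolding is_poly_def p_def using c sf[OF K]
    by (auto intro: finite_subset[of _ "{\<lambda>_. 0}"])
  moreover have "c = poly_eval p v" for v
  proof -
    have "poly_eval p v = (\<Sum>\<alpha>\<in>{\<lambda>_. 0}. p \<alpha> * tm \<alpha> v)"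
      by (rule eval_super) (auto simp: p_def)
    then show ?thesis by (simp add: p_def tm_def)
  qed
  ultimately show ?thesis unfolding polyfun_def by blast
qed

lemma polyfun_var:
  assumes K: "subfield K"
  shows "polyfun K (\<lambda>v. v j)"
proof -
  define e :: "nat \<Rightarrow> nat" where "e = (\<lambda>i. if i = j then 1 else 0)"
  define p :: "(nat \<Rightarrow> nat) \<Rightarrow> 'a" where "p = (\<lambda>\<alpha>. if \<alpha> = e then 1 else 0)"
  have "is_poly K p"
    unfolding is_poly_def p_def using sf[OF K]
    by (auto intro: finite_subset[of _ "{e}"] simp: e_def)
  moreover have "v j = poly_eval p v" for v
  proof -
    have "poly_eval p v = (\<Sum>\<alpha>\<in>{e}. p \<alpha> * tm \<alpha> v)"
      by (rule eval_super) (auto simp: p_def)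
    also have "\<dots> = tm e v" by (simp add: p_def)
    also have "\<dots> = (\<Prod>i\<in>{j}. v i ^ e i)" by (rule tm_super) (auto simp: e_def)
    finally show ?thesis by (simp add: e_def)
  qed
  ultimately show ?thesis unfolding polyfun_def by blast
qed

lemma polyfun_add:
  assumes K: "subfield K" and "polyfun K F" "polyfun K G"
  shows "polyfun K (\<lambda>v. F v + G v)"
proof -
  obtain p where p: "is_poly K p" "\<forall>v. F v = poly_eval p v" using assms(2) polyfun_def by blast
  obtain q where q: "is_poly K q" "\<forall>v. G v = poly_eval q v" using assms(3) polyfun_def by blast
  define s where "s = (\<lambda>\<alpha>. p \<alpha> + q \<alpha>)"
  let ?S = "{\<alpha>. p \<alpha> \<noteq> 0} \<union> {\<alpha>. q \<alpha> \<noteq> 0}"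
  have fin: "finite ?S" using p(1) q(1) unfolding is_poly_def by auto
  have sub: "{\<alpha>. s \<alpha> \<noteq> 0} \<subseteq> ?S" by (auto simp: s_def)
  have "is_poly K s"
    unfolding is_poly_def
  proof (intro conjI allI impI)
    show "s \<alpha> \<in> K" for \<alpha> using p(1) q(1) sf[OF K] unfolding is_poly_def s_def by auto
    show "finite {\<alpha>. s \<alpha> \<noteq> 0}" using finite_subset[OF sub fin] .
    show "finite {i. \<alpha> i \<noteq> 0}" if "s \<alpha> \<noteq> 0" for \<alpha>
      using that p(1) q(1) unfolding is_poly_def s_def by (cases "p \<alpha> = 0") auto
  qed
  moreover have "F v + G v = poly_eval s v" for v
  proof -
    have "F v = (\<Sum>\<alpha>\<in>?S. p \<alpha> * tm \<alpha> v)" using p(2) eval_super[OF fin, of p] by auto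
    moreover have "G v = (\<Sum>\<alpha>\<in>?S. q \<alpha> * tm \<alpha> v)" using q(2) eval_super[OF fin, of q] by auto
    moreover have "poly_eval s v = (\<Sum>\<alpha>\<in>?S. s \<alpha> * tm \<alpha> v)" using eval_super[OF fin sub] by auto
    ultimately show ?thesis by (simp add: s_def sum.distrib distrib_right)
  qed
  ultimately show ?thesis unfolding polyfun_def by blast
qed

lemma polyfun_mult:
  assumes K: "subfield K" and "polyfun K F" "polyfun K G"
  shows "polyfun K (\<lambda>v. F v * G v)"
proof -
  obtain p where p: "is_poly K p" "\<forall>v. F v = poly_eval p v" using assms(2) polyfun_def by blast
  obtain q where q: "is_poly K q" "\<forall>v. G v = poly_eval q v" using assms(3) polyfun_def by blast
  define Sp where "Sp = {\<alpha>. p \<alpha> \<noteq> 0}"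
  define Sq where "Sq = {\<alpha>. q \<alpha> \<noteq> 0}"
  define ad :: "(nat \<Rightarrow> nat) \<times> (nat \<Rightarrow> nat) \<Rightarrow> nat \<Rightarrow> nat"
    where "ad = (\<lambda>x i. fst x i + snd x i)"
  define r where "r = (\<lambda>\<gamma>. \<Sum>x\<in>{x. x \<in> Sp \<times> Sq \<and> ad x = \<gamma>}. p (fst x) * q (snd x))"
  have finp: "finite Sp" and finq: "finite Sq" using p(1) q(1) unfolding is_poly_def Sp_def Sq_def by auto
  have finsp: "\<forall>\<alpha>\<in>Sp. finite {i. \<alpha> i \<noteq> 0}" using p(1) unfolding is_poly_def Sp_def by auto
  have finsq: "\<forall>\<alpha>\<in>Sq. finite {i. \<alpha> i \<noteq> 0}" using q(1) unfolding is_poly_def Sq_def by auto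
  have finI: "finite (ad ` (Sp \<times> Sq))" using finp finq by auto
  have rsupp: "{\<gamma>. r \<gamma> \<noteq> 0} \<subseteq> ad ` (Sp \<times> Sq)"
  proof
    fix \<gamma> assume "\<gamma> \<in> {\<gamma>. r \<gamma> \<noteq> 0}"
    then have "{x. x \<in> Sp \<times> Sq \<and> ad x = \<gamma>} \<noteq> {}" unfolding r_def by force
    then show "\<gamma> \<in> ad ` (Sp \<times> Sq)" by blast
  qed
  have "is_poly K r"
    unfolding is_poly_def
  proof (intro conjI allI impI)
    show "r \<gamma> \<in> K" for \<gamma> unfolding r_def
      by (rule sf_sum[OF K]) (use p(1) q(1) sf[OF K] in \<open>auto simp: is_poly_def\<close>)
    show "finite {\<gamma>. r \<gamma> \<noteq> 0}" using finite_subset[OF rsupp finI] .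
    show "finite {i. \<gamma> i \<noteq> 0}" if rg: "r \<gamma> \<noteq> 0" for \<gamma>
    proof -
      obtain a b where ab: "a \<in> Sp" "b \<in> Sq" "\<gamma> = ad (a, b)" using rsupp rg by blast
      have "{i. \<gamma> i \<noteq> 0} \<subseteq> {i. a i \<noteq> 0} \<union> {i. b i \<noteq> 0}" using ab(3) by (auto simp: ad_def)
      then show ?thesis using finsp finsq ab by (meson finite_UnI finite_subset)
    qed
  qed
  moreover have "F v * G v = poly_eval r v" for v
  proof -
    have "F v * G v = (\<Sum>\<alpha>\<in>Sp. p \<alpha> * tm \<alpha> v) * (\<Sum>\<beta>\<in>Sq. q \<beta> * tm \<beta> v)"
      using p(2) q(2) eval_super[OF finp, of p] eval_super[OF finq, of q] by (auto simp: Sp_def Sq_def)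
    also have "\<dots> = (\<Sum>\<alpha>\<in>Sp. \<Sum>\<beta>\<in>Sq. (p \<alpha> * tm \<alpha> v) * (q \<beta> * tm \<beta> v))"
      by (rule sum_product)
    also have "\<dots> = (\<Sum>\<alpha>\<in>Sp. \<Sum>\<beta>\<in>Sq. p \<alpha> * q \<beta> * tm (ad (\<alpha>, \<beta>)) v)"
      using finsp finsq by (intro sum.cong refl) (simp add: ad_def tm_add)
    also have "\<dots> = (\<Sum>x\<in>Sp \<times> Sq. p (fst x) * q (snd x) * tm (ad x) v)"
      by (simp add: sum.cartesian_product case_prod_beta')
    also have "\<dots> = (\<Sum>\<gamma>\<in>ad ` (Sp \<times> Sq). \<Sum>x\<in>{x. x \<in> Sp \<times> Sq \<and> ad x = \<gamma>}. p (fst x) * q (snd x) * tm (ad x) v)"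
      by (rule sum.group[symmetric]) (use finp finq in auto)
    also have "\<dots> = (\<Sum>\<gamma>\<in>ad ` (Sp \<times> Sq). r \<gamma> * tm \<gamma> v)"
      unfolding r_def sum_distrib_right by (intro sum.cong refl) auto
    also have "\<dots> = poly_eval r v" using eval_super[OF finI rsupp] by simp
    finally show ?thesis .
  qed
  ultimately show ?thesis unfolding polyfun_def by blast
qed

lemma polyfun_sum:
  assumes K: "subfield K" and "\<forall>x\<in>A. polyfun K (F x)"
  shows "polyfun K (\<lambda>v. \<Sum>x\<in>A. F x v)"
proof (cases "finite A")
  case True
  then show ?thesis using assms(2)
    by (induction A rule: finite_induct) (auto intro: polyfun_add[OF K] polyfun_const[OF K] sf[OF K])
next
  case False
  then show ?thesis using polyfun_const[OF K sf(1)[OF K]] by simp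
qed

lemma polyfun_diff:
  assumes K: "subfield K" and "polyfun K F" "polyfun K G"
  shows "polyfun K (\<lambda>v. F v - G v)"
proof -
  have "polyfun K (\<lambda>v. F v + (-1) * G v)"
    by (intro polyfun_add[OF K] polyfun_mult[OF K] assms polyfun_const[OF K] sf[OF K])
  then show ?thesis by simp
qed


definition pf :: "'a::field set \<Rightarrow> ((nat \<Rightarrow> 'a) \<Rightarrow> 'a mps) \<Rightarrow> bool" where
  "pf K F \<longleftrightarrow> (\<forall>\<alpha>. polyfun K (\<lambda>v. F v \<alpha>))"

lemma pf_const:
  assumes K: "subfield K" and "\<forall>\<alpha>. c \<alpha> \<in> K"
  shows "pf K (\<lambda>v. c)"
  unfolding pf_def using assms polyfun_const by blast

lemma pf_one:
  assumes K: "subfield K"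
  shows "pf K (\<lambda>v. mps_one)"
  by (rule pf_const[OF K]) (simp add: mps_one_def sf[OF K])

lemma pf_times:
  assumes K: "subfield K" and "pf K F" "pf K G"
  shows "pf K (\<lambda>v. mps_times (F v) (G v))"
  unfolding pf_def mps_times_def
  using assms unfolding pf_def
  by (auto intro!: polyfun_sum[OF K] polyfun_mult[OF K])

lemma pf_pow:
  assumes K: "subfield K" and "pf K F"
  shows "pf K (\<lambda>v. mps_pow (F v) k)"
  by (induction k) (auto intro: pf_one[OF K] pf_times[OF K] assms(2))

lemma pf_foldr:
  assumes K: "subfield K" and "\<forall>j. pf K (\<lambda>v. Y v j)"
  shows "pf K (\<lambda>v. foldr (\<lambda>j acc. mps_times (mps_pow (Y v j) (\<gamma> j)) acc) xs mps_one)"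
proof (induction xs)
  case Nil
  then show ?case using pf_one[OF K] by simp
next
  case (Cons a xs)
  then show ?case using pf_times[OF K pf_pow[OF K assms(2)[rule_format, of a]] Cons.IH] by simp
qed

lemma pf_evalY:
  assumes K: "subfield K" and "\<forall>\<gamma> \<alpha>. c \<gamma> \<alpha> \<in> K" and "\<forall>j. pf K (\<lambda>v. Y v j)"
  shows "polyfun K (\<lambda>v. eval_Y m c (Y v) \<alpha>)"
proof -
  have "pf K (\<lambda>v. mps_times (c \<gamma>) (mps_monom m (Y v) \<gamma>))" for \<gamma>
    unfolding mps_monom_def
    by (intro pf_times[OF K] pf_const[OF K] pf_foldr[OF K] assms(3)) (use assms(2) in auto)
  then show ?thesis unfolding eval_Y_def pf_def
    by (intro polyfun_sum[OF K]) auto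
qed

definition vo :: "nat \<Rightarrow> 'a::field mps \<Rightarrow> bool" where
  "vo n f \<longleftrightarrow> (\<forall>\<alpha>. f \<alpha> \<noteq> 0 \<longrightarrow> (\<forall>i\<ge>n. \<alpha> i = 0))"

lemma vo_times:
  assumes "vo n f" "vo n g"
  shows "vo n (mps_times f g)"
  unfolding vo_def
proof (intro allI impI)
  fix \<alpha> i assume nz: "mps_times f g \<alpha> \<noteq> 0" and i: "n \<le> i"
  show "\<alpha> i = 0"
  proof (rule ccontr)
    assume ai: "\<alpha> i \<noteq> 0"
    have fv: "f \<gamma> = 0" if "\<gamma> i \<noteq> 0" for \<gamma>
      using assms(1) i that unfolding vo_def by auto
    have gv: "g \<gamma> = 0" if "\<gamma> i \<noteq> 0" for \<gamma>
      using assms(2) i that unfolding vo_def by auto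
    have prodz: "f \<beta> * g (\<lambda>i. \<alpha> i - \<beta> i) = 0" for \<beta>
    proof (cases "\<beta> i = 0")
      case True
      then show ?thesis using gv[of "\<lambda>i. \<alpha> i - \<beta> i"] ai by simp
    next
      case False
      then show ?thesis using fv by simp
    qed
    have "mps_times f g \<alpha> = 0" unfolding mps_times_def by (intro sum.neutral ballI) (rule prodz)
    with nz show False by simp
  qed
qed

lemma vo_one: "vo n mps_one"
  unfolding vo_def mps_one_def by auto

lemma vo_pow: "vo n f \<Longrightarrow> vo n (mps_pow f k)"
  by (induction k) (auto intro: vo_one vo_times)

lemma vo_foldr:
  assumes "\<forall>j. vo n (y j)"
  shows "vo n (foldr (\<lambda>j acc. mps_times (mps_pow (y j) (\<gamma> j)) acc) xs mps_one)"
  by (induction xs) (auto intro: vo_one vo_times vo_pow assms[rule_format])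

lemma evalY_vanish:
  assumes "\<forall>\<gamma>. vo n (c \<gamma>)" "\<forall>j. vo n (y j)" "n \<le> i" "\<alpha> i \<noteq> 0"
  shows "eval_Y m c y \<alpha> = 0"
proof -
  have vv: "vo n (mps_times (c \<gamma>) (mps_monom m y \<gamma>))" for \<gamma>
    unfolding mps_monom_def using assms(1,2) by (intro vo_times vo_foldr) auto
  have h: "mps_times (c \<gamma>) (mps_monom m y \<gamma>) \<alpha> = 0" for \<gamma>
    using vv[of \<gamma>] assms(3,4) unfolding vo_def by auto
  then show ?thesis unfolding eval_Y_def by simp
qed

lemma evalY_cong:
  assumes "\<forall>j<m. y j = y' j"
  shows "eval_Y m c y = eval_Y m c y'"
proof -
  have "mps_monom m y \<gamma> = mps_monom m y' \<gamma>" for \<gamma>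
    unfolding mps_monom_def by (rule foldr_cong) (use assms in auto)
  then show ?thesis unfolding eval_Y_def by simp
qed


theorem theorem3p5:
  fixes K :: "'a::field set" and n m r :: nat
    and f :: "nat \<Rightarrow> (nat \<Rightarrow> nat) \<Rightarrow> 'a mps"
    and J :: "nat \<Rightarrow> nat set" and yhat :: "nat \<Rightarrow> 'a mps"
  assumes "subfield K" and "alg_pure K" and "aleph0_complete K"
    and "\<forall>k<r. is_Ypoly n m K (f k)"
    and "\<forall>i<m. J i \<subseteq> {0..<n}"
    and "\<forall>i<m. yhat i \<in> mps n UNIV \<and> mps_in_vars (J i) (yhat i)"
    and "\<forall>k<r. eval_Y m (f k) yhat = mps_zero"
  shows "\<exists>y. (\<forall>i<m. y i \<in> mps n K \<and> mps_in_vars (J i) (y i) \<and> mps_ord (y i) = mps_ord (yhat i))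
             \<and> (\<forall>k<r. eval_Y m (f k) y = mps_zero)"
proof -
  note K = assms(1)
  define lst where "lst = (\<lambda>xs::nat list. \<lambda>j. if j < n \<and> j < length xs then xs ! j else 0)"
  define code where "code = (\<lambda>\<alpha>::nat\<Rightarrow>nat. map \<alpha> [0..<n])"
  define zv where "zv = (\<lambda>i \<alpha>. to_nat (Inl (i, code \<alpha>) :: (nat \<times> nat list) + nat))"
  define wv where "wv = (\<lambda>i. to_nat (Inr i :: (nat \<times> nat list) + nat))"
  define al where "al = (\<lambda>i (\<alpha>::nat\<Rightarrow>nat). (\<forall>j. \<alpha> j \<noteq> 0 \<longrightarrow> j \<in> J i) \<and> (\<forall>j\<ge>n. \<alpha> j = 0))"
  define Y where "Y = (\<lambda>(v::nat\<Rightarrow>'a) i \<alpha>. if al i \<alpha> then v (zv i \<alpha>) else 0)"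
  define deg where "deg = (\<lambda>\<alpha>::nat\<Rightarrow>nat. \<Sum>i\<in>{i. \<alpha> i \<noteq> 0}. \<alpha> i)"
  define L where "L = (\<lambda>i. LEAST d. \<exists>\<alpha>. yhat i \<alpha> \<noteq> 0 \<and> deg \<alpha> = d)"
  define a0 where "a0 = (\<lambda>i. SOME \<alpha>. yhat i \<alpha> \<noteq> 0 \<and> deg \<alpha> = L i)"
  define E :: "nat \<times> nat \<times> nat list \<Rightarrow> (nat \<Rightarrow> 'a) \<Rightarrow> 'a" where
    "E = (\<lambda>(t,a,xs) v. if t = 0 then (if a < r then eval_Y m (f a) (Y v) (lst xs) else 0)
        else if t = 1 then (if a < m \<and> enat (deg (lst xs)) < mps_ord (yhat a) then v (zv a (lst xs)) else 0)
        else (if a < m \<and> yhat a \<noteq> mps_zero then v (wv a) * v (zv a (a0 a)) - 1 else 0))"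
  have lc: "lst (code \<alpha>) = \<alpha>" if "\<forall>j\<ge>n. \<alpha> j = 0" for \<alpha>
    using that by (auto simp: lst_def code_def fun_eq_iff)
  have ls: "\<forall>j\<ge>n. lst xs j = 0" for xs by (simp add: lst_def)
  have fK: "\<forall>\<gamma> \<alpha>. f k \<gamma> \<alpha> \<in> K" if "k < r" for k
    using assms(4) that unfolding is_Ypoly_def mps_def by auto
  have pfY: "\<forall>j. pf K (\<lambda>v. Y v j)"
    unfolding pf_def Y_def
  proof (intro allI)
    fix j \<alpha>
    show "polyfun K (\<lambda>v. if al j \<alpha> then v (zv j \<alpha>) else 0)"
      by (cases "al j \<alpha>") (auto intro: polyfun_var[OF K] polyfun_const[OF K] sf[OF K])
  qed
  have pfE: "polyfun K (E idx)" for idx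
  proof -
    obtain t a xs where idx: "idx = (t, a, xs)" by (cases idx) auto
    have c0: "polyfun K (\<lambda>v. 0)" by (rule polyfun_const[OF K sf(1)[OF K]])
    consider "t = 0" | "t = 1" | "t \<noteq> 0" "t \<noteq> 1" by blast
    then show ?thesis
    proof cases
      case 1
      show ?thesis
      proof (cases "a < r")
        case True
        then show ?thesis unfolding idx E_def using 1
          using pf_evalY[OF K fK[OF True] pfY, of m "lst xs"] by simp
      next
        case False
        then show ?thesis unfolding idx E_def using 1 c0 by simp
      qed
    next
      case 2
      then show ?thesis unfolding idx E_def using c0 polyfun_var[OF K]
        by (cases "a < m \<and> enat (deg (lst xs)) < mps_ord (yhat a)") auto
    next
      case 3
      have "polyfun K (\<lambda>v. v (wv a) * v (zv a (a0 a)) - 1)"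
        by (intro polyfun_diff[OF K] polyfun_mult[OF K] polyfun_var[OF K] polyfun_const[OF K] sf[OF K])
      then show ?thesis unfolding idx E_def using 3 c0
        by (cases "a < m \<and> yhat a \<noteq> mps_zero") auto
    qed
  qed
  define P where "P = (\<lambda>idx. SOME p. is_poly K p \<and> (\<forall>v. E idx v = poly_eval p v))"
  have P: "is_poly K (P idx) \<and> (\<forall>v. E idx v = poly_eval (P idx) v)" for idx
    unfolding P_def using someI_ex[OF pfE[unfolded polyfun_def]] by blast
  define S where "S = range P"
  have cS: "countable S" unfolding S_def by simp
  have polyS: "\<forall>p\<in>S. is_poly K p" unfolding S_def using P by blast
  have yh_al: "al i \<alpha>" if "i < m" "yhat i \<alpha> \<noteq> 0" for i \<alpha>
    using assms(6) that unfolding al_def mps_def mps_in_vars_def by auto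
  have yh_nz: "\<exists>\<alpha>. yhat i \<alpha> \<noteq> 0" if "yhat i \<noteq> mps_zero" for i
    using that unfolding mps_zero_def by auto
  have ordL: "mps_ord (yhat i) = enat (L i)" if "yhat i \<noteq> mps_zero" for i
    using that unfolding mps_ord_def L_def deg_def by simp
  have a0: "yhat i (a0 i) \<noteq> 0 \<and> deg (a0 i) = L i" if nzi: "yhat i \<noteq> mps_zero" for i
  proof -
    obtain \<alpha> where "yhat i \<alpha> \<noteq> 0" using yh_nz[OF nzi] by blast
    then have "\<exists>d. \<exists>\<alpha>. yhat i \<alpha> \<noteq> 0 \<and> deg \<alpha> = d" by blast
    then have "\<exists>\<alpha>. yhat i \<alpha> \<noteq> 0 \<and> deg \<alpha> = L i" unfolding L_def by (rule LeastI_ex)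
    then show ?thesis unfolding a0_def by (rule someI_ex)
  qed
  have low: "\<not> enat (deg \<alpha>) < mps_ord (yhat i)" if "yhat i \<alpha> \<noteq> 0" for i \<alpha>
  proof -
    have nz: "yhat i \<noteq> mps_zero" using that unfolding mps_zero_def by auto
    have "L i \<le> deg \<alpha>" unfolding L_def by (rule Least_le) (use that in blast)
    then show ?thesis using ordL[OF nz] by simp
  qed
  define v0 where "v0 = (\<lambda>t. case from_nat t :: (nat \<times> nat list) + nat of
       Inl (i, xs) \<Rightarrow> yhat i (lst xs) | Inr i \<Rightarrow> inverse (yhat i (a0 i)))"
  have v0z: "v0 (zv i \<alpha>) = yhat i (lst (code \<alpha>))" for i \<alpha> by (simp add: v0_def zv_def)
  have v0w: "v0 (wv i) = inverse (yhat i (a0 i))" for i by (simp add: v0_def wv_def)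
  have Yv0: "\<forall>i<m. Y v0 i = yhat i"
  proof (intro allI impI ext)
    fix i \<alpha> assume i: "i < m"
    show "Y v0 i \<alpha> = yhat i \<alpha>"
    proof (cases "al i \<alpha>")
      case True
      then show ?thesis unfolding Y_def using v0z lc[of \<alpha>] by (simp add: al_def)
    next
      case False
      then show ?thesis unfolding Y_def using yh_al[OF i] by auto
    qed
  qed
  have Ev0: "E idx v0 = 0" for idx
  proof -
    obtain t a xs where idx: "idx = (t, a, xs)" by (cases idx) auto
    consider "t = 0" | "t = 1" | "t \<noteq> 0" "t \<noteq> 1" by blast
    then show ?thesis
    proof cases
      case 1
      have "a < r \<Longrightarrow> eval_Y m (f a) (Y v0) = mps_zero"
        using evalY_cong[of m "Y v0" yhat] Yv0 assms(7) by simp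
      then show ?thesis unfolding idx E_def using 1 by (simp add: mps_zero_def)
    next
      case 2
      have "yhat a (lst xs) = 0" if "enat (deg (lst xs)) < mps_ord (yhat a)"
        using low that by blast
      then show ?thesis unfolding idx E_def using 2 v0z lc[OF ls] by simp
    next
      case 3
      have "yhat a (a0 a) * inverse (yhat a (a0 a)) = 1" if "a < m" "yhat a \<noteq> mps_zero"
        using a0[OF that(2)] by simp
      moreover have "lst (code (a0 a)) = a0 a" if "a < m" "yhat a \<noteq> mps_zero"
        using lc yh_al[OF that(1)] a0[OF that(2)] unfolding al_def by auto
      ultimately show ?thesis unfolding idx E_def using 3 v0z v0w by (auto simp: mult.commute)
    qed
  qed
  have fin: "\<forall>F. F \<subseteq> S \<and> finite F \<longrightarrow> (\<exists>v. (\<forall>i. v i \<in> K) \<and> (\<forall>p\<in>F. poly_eval p v = 0))"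
  proof (intro allI impI)
    fix F assume F: "F \<subseteq> S \<and> finite F"
    have "\<forall>p\<in>F. poly_eval p v0 = 0" using F P Ev0 unfolding S_def by auto
    then show "\<exists>v. (\<forall>i. v i \<in> K) \<and> (\<forall>p\<in>F. poly_eval p v = 0)"
      using assms(2)[unfolded alg_pure_def, rule_format, of F] F polyS by auto
  qed
  obtain v where vK: "\<forall>i. v i \<in> K" and vS: "\<forall>p\<in>S. poly_eval p v = 0"
    using assms(3)[unfolded aleph0_complete_def, rule_format, OF conjI[OF cS polyS]] fin by auto
  have Ev: "E idx v = 0" for idx
  proof -
    have "P idx \<in> S" unfolding S_def by simp
    then have "poly_eval (P idx) v = 0" by (rule bspec[OF vS])
    then show ?thesis using P[of idx] by simp
  qed
  define y where "y = Y v"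
  have y_al: "al i \<alpha>" if "y i \<alpha> \<noteq> 0" for i \<alpha> using that unfolding y_def Y_def by (auto split: if_splits)
  have y_low: "y i \<alpha> = 0" if "i < m" "enat (deg \<alpha>) < mps_ord (yhat i)" for i \<alpha>
  proof (cases "al i \<alpha>")
    case True
    have "lst (code \<alpha>) = \<alpha>" using True lc unfolding al_def by auto
    then show ?thesis using Ev[of "(1, i, code \<alpha>)"] that True unfolding E_def y_def Y_def by simp
  next
    case False
    then show ?thesis unfolding y_def Y_def by simp
  qed
  have part1: "y i \<in> mps n K \<and> mps_in_vars (J i) (y i) \<and> mps_ord (y i) = mps_ord (yhat i)" if i: "i < m" for i
  proof (intro conjI)
    show "y i \<in> mps n K" unfolding mps_def
      using vK sf(1)[OF K] y_al unfolding al_def by (auto simp: y_def Y_def)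
    show "mps_in_vars (J i) (y i)" unfolding mps_in_vars_def using y_al unfolding al_def by auto
    show "mps_ord (y i) = mps_ord (yhat i)"
    proof (cases "yhat i = mps_zero")
      case True
      then have "mps_ord (yhat i) = \<infinity>" by (simp add: mps_ord_def)
      then have "y i = mps_zero" using y_low[OF i] by (auto simp: mps_zero_def)
      then show ?thesis using True by (simp add: mps_ord_def)
    next
      case False
      note a0i = a0[OF False]
      have "v (wv i) * v (zv i (a0 i)) - 1 = 0" using Ev[of "(2, i, [])"] i False unfolding E_def by simp
      then have "v (zv i (a0 i)) \<noteq> 0" by auto
      moreover have "al i (a0 i)" using yh_al[OF i] a0i by blast
      ultimately have ya0: "y i (a0 i) \<noteq> 0" unfolding y_def Y_def by simp
      then have ynz: "y i \<noteq> mps_zero" unfolding mps_zero_def by auto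
      have "(LEAST d. \<exists>\<alpha>. y i \<alpha> \<noteq> 0 \<and> (\<Sum>j\<in>{j. \<alpha> j \<noteq> 0}. \<alpha> j) = d) = L i"
      proof (rule Least_equality)
        show "\<exists>\<alpha>. y i \<alpha> \<noteq> 0 \<and> (\<Sum>j\<in>{j. \<alpha> j \<noteq> 0}. \<alpha> j) = L i"
          using ya0 a0i unfolding deg_def by blast
        fix d assume "\<exists>\<alpha>. y i \<alpha> \<noteq> 0 \<and> (\<Sum>j\<in>{j. \<alpha> j \<noteq> 0}. \<alpha> j) = d"
        then obtain \<alpha> where al: "y i \<alpha> \<noteq> 0" "deg \<alpha> = d" unfolding deg_def by blast
        then have "\<not> enat (deg \<alpha>) < mps_ord (yhat i)" using y_low[OF i] by blast
        then show "L i \<le> d" using ordL[OF False] al(2) by simp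
      qed
      then show ?thesis using ynz ordL[OF False] by (simp add: mps_ord_def)
    qed
  qed
  have part2: "eval_Y m (f k) y = mps_zero" if k: "k < r" for k
  proof (rule ext)
    fix \<alpha>
    show "eval_Y m (f k) y \<alpha> = mps_zero \<alpha>"
    proof (cases "\<forall>j\<ge>n. \<alpha> j = 0")
      case True
      then show ?thesis using Ev[of "(0, k, code \<alpha>)"] k lc[OF True]
        unfolding E_def y_def by (simp add: mps_zero_def)
    next
      case False
      then obtain j where j: "n \<le> j" "\<alpha> j \<noteq> 0" by blast
      have "\<forall>\<gamma>. vo n (f k \<gamma>)" using assms(4) k unfolding is_Ypoly_def mps_def vo_def by auto
      moreover have "\<forall>j. vo n (y j)" using y_al unfolding vo_def al_def by auto
      ultimately show ?thesis using evalY_vanish j by (simp add: mps_zero_def)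
    qed
  qed
  show ?thesis using part1 part2 by blast
qed

end
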